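(* Let $0<\epsilon<0.5$ and let $n,s,s_0\in\mathbb{N}$ with $s_0\mid n$ and $n\ge s>2s_0$. If $\boldsymbol{c}\in\Sigma_{\rm DNA}^n$ is GC-$(s_0,\epsilon)$-partition balanced, then $\boldsymbol{c}$ is GC-$(s,\delta)$-locally balanced with $$\delta=\frac{(s_0-1)(1-2\epsilon)}{s}+\epsilon.$$ Consequently every GC-$(s_0,\epsilon)$-partition balanced code of length $n$ is GC-$(s,\delta)$-locally balanced.
   Context: For $\boldsymbol{x}\in\Sigma_{\rm DNA}^n$ ($\Sigma_{\rm DNA}=\{\mathrm A,\mathrm T,\mathrm C,\mathrm G\}$), $\mathrm{wt}_{\rm GC}(\boldsymbol{x})$ is the number of positions equal to G or C. If $s_0\mid n$ and $\boldsymbol{x}=(\boldsymbol{x}^{(1)},\dots,\boldsymbol{x}^{(n/s_0)})$ with $\boldsymbol{x}^{(i)}=(x_{(i-1)s_0+1},\dots,x_{is_0})$, then $\boldsymbol{x}$ is GC-$(s_0,\epsilon)$-partition balanced if $|\mathrm{wt}_{\rm GC}(\boldsymbol{x}^{(i)})/s_0-0.5|\le\epsilon$ for all $i\in[n/s_0]$. For $s<n$ (or $s\le n$), $\boldsymbol{x}$ is GC-$(s,\delta)$-locally balanced if for every $i\in[n-s+1]$ the window $\boldsymbol{x}_i=(x_i,\dots,x_{i+s-1})$ satisfies $|\mathrm{wt}_{\rm GC}(\boldsymbol{x}_i)/s-0.5|\le\delta$. *)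

theory Defs
  imports Complex_Main
begin

datatype dna = A | T | C | G

definition is_GC :: "dna \<Rightarrow> bool" where
  "is_GC x \<longleftrightarrow> x = G \<or> x = C"

definition wt_GC :: "dna list \<Rightarrow> nat" where
  "wt_GC x = length (filter is_GC x)"

text \<open>Window of length s starting at 1-based position i: (x_i, ..., x_{i+s-1}).\<close>
definition window :: "dna list \<Rightarrow> nat \<Rightarrow> nat \<Rightarrow> dna list" where
  "window x i s = take s (drop (i - 1) x)"

definition GC_partition_balanced :: "nat \<Rightarrow> real \<Rightarrow> dna list \<Rightarrow> bool" where
  "GC_partition_balanced s0 eps x \<longleftrightarrow>
     s0 dvd length x \<and>
     (\<forall>i\<in>{1..length x div s0}.
        \<bar>real (wt_GC (window x ((i - 1) * s0 + 1) s0)) / real s0 - 1/2\<bar> \<le> eps)"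

definition GC_locally_balanced :: "nat \<Rightarrow> real \<Rightarrow> dna list \<Rightarrow> bool" where
  "GC_locally_balanced s delta x \<longleftrightarrow>
     (\<forall>i\<in>{1..length x - s + 1}.
        \<bar>real (wt_GC (window x i s)) / real s - 1/2\<bar> \<le> delta)"

end

theory Submission
  imports Defs
begin

definition gfun :: "dna list \<Rightarrow> nat \<Rightarrow> real" where
  "gfun c j = (if is_GC (c ! j) then 1 else 0)"

lemma wt_sum:
  assumes "k + s \<le> length c"
  shows "real (wt_GC (take s (drop k c))) = (\<Sum>j=k..<k+s. gfun c j)"
  using assms
proof (induction s)
  case 0 then show ?case by (simp add: wt_GC_def)
next
  case (Suc s)
  have "take (Suc s) (drop k c) = take s (drop k c) @ [drop k c ! s]"
    using Suc.prems by (simp add: take_Suc_conv_app_nth)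
  moreover have "drop k c ! s = c ! (k+s)" using Suc.prems by simp
  ultimately show ?case using Suc by (simp add: wt_GC_def gfun_def)
qed

lemma gfun_bounds: "0 \<le> gfun c j" "gfun c j \<le> 1"
  by (auto simp: gfun_def)

lemma part_bounds:
  "0 \<le> (\<Sum>j=a..<b. gfun c j)" "(\<Sum>j=a..<b. gfun c j) \<le> real (b - a)"
proof -
  show "0 \<le> (\<Sum>j=a..<b. gfun c j)" by (rule sum_nonneg) (simp add: gfun_bounds)
  have "(\<Sum>j=a..<b. gfun c j) \<le> (\<Sum>j=a..<b. 1)" by (rule sum_mono) (simp add: gfun_bounds)
  then show "(\<Sum>j=a..<b. gfun c j) \<le> real (b - a)" by simp
qed

lemma blocks_sum:
  "(\<Sum>j=a*s0..<(a+d)*s0. gfun c j) = (\<Sum>q=a..<a+d. (\<Sum>j=q*s0..<q*s0+s0. gfun c j))"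
proof (induction d)
  case 0 then show ?case by simp
next
  case (Suc d)
  have "(\<Sum>j=a*s0..<(a+Suc d)*s0. gfun c j) =
        (\<Sum>j=a*s0..<(a+d)*s0. gfun c j) + (\<Sum>j=(a+d)*s0..<(a+d)*s0+s0. gfun c j)"
    by (subst sum.atLeastLessThan_concat[symmetric, of _ "(a+d)*s0"]) (auto simp: algebra_simps)
  then show ?case using Suc by simp
qed

lemma lin_helper:
 fixes W L M R eps :: real and a b m s s0 :: nat
 assumes "W = L + M + R" "0 \<le> L" "L \<le> real a" "0 \<le> R" "R \<le> real b"
 "M \<le> real m / 2 + eps * real m" "real m / 2 - eps * real m \<le> M"
 "(real a + real b) / 2 - eps * real a - eps * real b
     \<le> real s0 - 1 - 2 * eps * real s0 + 2 * eps" "real s = real a + real m + real b"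
 shows "W - real s / 2 \<le> real s0 - 1 - 2 * eps * real s0 + 2 * eps + eps * real a + eps * real m + eps * real b"
   "- (W - real s / 2) \<le> real s0 - 1 - 2 * eps * real s0 + 2 * eps + eps * real a + eps * real m + eps * real b"
  using assms by argo+

theorem lemma7:
  fixes eps :: real and n s s0 :: nat and c :: "dna list"
  assumes "0 < eps" and "eps < 1/2"
    and "s0 dvd n" and "s \<le> n" and "2 * s0 < s"
    and "length c = n"
    and "GC_partition_balanced s0 eps c"
  shows "GC_locally_balanced s ((real s0 - 1) * (1 - 2 * eps) / real s + eps) c"
  unfolding GC_locally_balanced_def
proof
  fix i assume i: "i \<in> {1..length c - s + 1}"
  define k where "k = i - 1"
  have ks: "k + s \<le> n" using i assms(4,6) by (auto simp: k_def)
  have win: "window c i s = take s (drop k c)" by (simp add: window_def k_def)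
  have s0pos: "s0 > 0" using assms(3,4,5) by (cases "s0 = 0") auto
  define q1 where "q1 = (k + s0 - 1) div s0"
  define q2 where "q2 = (k + s) div s0"
  have q1a: "q1 * s0 \<le> k + s0 - 1" unfolding q1_def by (metis div_times_less_eq_dividend mult.commute)
  have q1b: "k \<le> q1 * s0"
  proof -
    have "k + s0 - 1 < q1 * s0 + s0" unfolding q1_def using s0pos
      by (metis add.commute div_mult_mod_eq mod_less_divisor nat_add_left_cancel_less)
    then show ?thesis using s0pos by linarith
  qed
  have q2a: "q2 * s0 \<le> k + s" unfolding q2_def by (metis div_times_less_eq_dividend mult.commute)
  have q2b: "k + s < q2 * s0 + s0" unfolding q2_def using s0pos
    by (metis add.commute div_mult_mod_eq mod_less_divisor nat_add_left_cancel_less)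
  have q12: "q1 * s0 \<le> q2 * s0" using q1a q2b assms(5) by linarith
  hence q12': "q1 \<le> q2" using s0pos by simp
  have q2n: "q2 \<le> n div s0" unfolding q2_def using ks by (simp add: div_le_mono)
  define a where "a = q1 * s0 - k"
  define b where "b = k + s - q2 * s0"
  define m where "m = (q2 - q1) * s0"
  have abm: "s = a + m + b" using q1b q12 q2a q2b assms(5) by (simp add: a_def b_def m_def diff_mult_distrib)
  have a1: "a \<le> s0 - 1" using q1a q1b by (simp add: a_def)
  have b1: "b \<le> s0 - 1" using q2b q2a by (simp add: b_def)
  define g where "g = gfun c"
  define W where "W = (\<Sum>j=k..<k+s. g j)"
  define L where "L = (\<Sum>j=k..<q1*s0. g j)"
  define M where "M = (\<Sum>j=q1*s0..<q2*s0. g j)"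
  define R where "R = (\<Sum>j=q2*s0..<k+s. g j)"
  have WLMR: "W = L + M + R" unfolding W_def L_def M_def R_def
    using q1b q12 q2a by (metis sum.atLeastLessThan_concat le_trans)
  have L: "0 \<le> L" "L \<le> real a" unfolding L_def g_def a_def using part_bounds by auto
  have R: "0 \<le> R" "R \<le> real b" unfolding R_def g_def b_def using part_bounds by auto
  have blk: "real s0 * (1/2 - eps) \<le> (\<Sum>j=q*s0..<q*s0+s0. g j) \<and>
             (\<Sum>j=q*s0..<q*s0+s0. g j) \<le> real s0 * (1/2 + eps)" if q: "q \<in> {q1..<q2}" for q
  proof -
    have qn: "q + 1 \<in> {1..length c div s0}" using q q2n assms(6) by auto
    have "(q+1) * s0 \<le> n" using qn assms(3,6)
      by (metis atLeastAtMost_iff dvd_mult_div_cancel mult.commute mult_le_mono2)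
    hence le: "q*s0 + s0 \<le> length c" using assms(6) by simp
    have "\<bar>real (wt_GC (window c ((q + 1 - 1) * s0 + 1) s0)) / real s0 - 1/2\<bar> \<le> eps"
      using assms(7) qn unfolding GC_partition_balanced_def by blast
    moreover have "window c ((q + 1 - 1) * s0 + 1) s0 = take s0 (drop (q*s0) c)"
      by (simp add: window_def)
    ultimately have h: "\<bar>(\<Sum>j=q*s0..<q*s0+s0. g j) / real s0 - 1/2\<bar> \<le> eps"
      using wt_sum[OF le] g_def by simp
    have sp: "real s0 > 0" using s0pos by simp
    from h have "(\<Sum>j=q*s0..<q*s0+s0. g j) / real s0 \<le> 1/2 + eps"
      "1/2 - eps \<le> (\<Sum>j=q*s0..<q*s0+s0. g j) / real s0" by (auto simp: abs_le_iff)
    thus ?thesis using sp by (simp add: field_simps)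
  qed
  have Mq: "M = (\<Sum>q=q1..<q2. (\<Sum>j=q*s0..<q*s0+s0. g j))"
    unfolding M_def g_def using blocks_sum[where a=q1 and ?s0.0=s0 and d="q2 - q1" and c=c] q12' by simp
  have "M \<le> (\<Sum>q=q1..<q2. real s0 * (1/2 + eps))" unfolding Mq
    by (rule sum_mono) (use blk in blast)
  hence Mu: "M \<le> real m * (1/2 + eps)" by (simp add: m_def)
  have "(\<Sum>q=q1..<q2. real s0 * (1/2 - eps)) \<le> M" unfolding Mq
    by (rule sum_mono) (use blk in blast)
  hence Ml: "real m * (1/2 - eps) \<le> M" by (simp add: m_def)
  have wW: "real (wt_GC (window c i s)) = W" unfolding win W_def g_def using wt_sum ks assms(6) by simp
  have sp: "real s > 0" using assms(5) by simp
  have ab: "real a + real b \<le> 2 * (real s0 - 1)" proof -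
    have "a + b + 2 \<le> 2 * s0" using a1 b1 s0pos by linarith
    hence "real (a + b + 2) \<le> real (2 * s0)" by (simp only: of_nat_le_iff)
    thus ?thesis by simp
  qed
  have e: "(real a + real b) * (1/2 - eps) \<le> 2 * (real s0 - 1) * (1/2 - eps)"
    using ab assms(2) by (intro mult_right_mono) auto
  have sr: "real s = real a + real m + real b" using abm by simp
  have Mu': "M \<le> real m / 2 + eps * real m" using Mu by (simp add: algebra_simps)
  have Ml': "real m / 2 - eps * real m \<le> M" using Ml by (simp add: algebra_simps)
  have e': "(real a + real b) / 2 - eps * real a - eps * real b \<le> real s0 - 1 - 2 * eps * real s0 + 2 * eps"
    using e by (simp add: algebra_simps)
  have rhs: "(real s0 - 1) * (1 - 2 * eps) + eps * real s = real s0 - 1 - 2 * eps * real s0 + 2 * eps + eps * real a + eps * real m + eps * real b"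
    unfolding sr by (simp add: algebra_simps)
  have "\<bar>W - real s / 2\<bar> \<le> (real s0 - 1) * (1 - 2 * eps) + eps * real s"
    unfolding rhs abs_le_iff
  proof (rule conjI)
    show "W - real s / 2 \<le> real s0 - 1 - 2 * eps * real s0 + 2 * eps + eps * real a + eps * real m + eps * real b"
      using lin_helper(1)[OF WLMR L R Mu' Ml' e' sr] .
    show "- (W - real s / 2) \<le> real s0 - 1 - 2 * eps * real s0 + 2 * eps + eps * real a + eps * real m + eps * real b"
      using lin_helper(2)[OF WLMR L R Mu' Ml' e' sr] .
  qed
  hence "\<bar>W / real s - 1/2\<bar> \<le> ((real s0 - 1) * (1 - 2 * eps) + eps * real s) / real s"
    using sp by (simp add: field_simps abs_div_pos[symmetric] flip: abs_divide)
  also have "\<dots> = (real s0 - 1) * (1 - 2 * eps) / real s + eps" using sp by (simp add: field_simps)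
  finally show "\<bar>real (wt_GC (window c i s)) / real s - 1/2\<bar> \<le> (real s0 - 1) * (1 - 2 * eps) / real s + eps"
    using wW by simp
qed

end
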